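(* Assume $f:[a,b]\to\mathbb{R}$ has an analytic extension. Then there exist constants $C,\gamma>0$, depending only on $f$, such that for every $L\in\mathbb{N}$ there exists a ReLU neural network $\Phi_L:\mathbb{R}\to\mathbb{R}$ with \[ \sup_{x\in[a,b]}|f(x)-\Phi_L(x)|\le C\exp(-\gamma L^{1/2}),\qquad \mathrm{depth}(\Phi_L)\le CL,\qquad \mathrm{width}(\Phi_L)\le C. \]
   Context: A function $F:(\alpha,\beta)\to\mathbb{R}$ is analytic if for every $x_0\in(\alpha,\beta)$ there are $r>0$ and $(a_k)_{k\ge0}$ with $\sum_k|a_k|r^k<\infty$ and $F(x)=\sum_ka_k(x-x_0)^k$ for $|x-x_0|<r$. A function $f:[a,b]\to\mathbb{R}$ has an analytic extension if there is an analytic $F:(\alpha,\beta)\to\mathbb{R}$ with $[a,b]\subset(\alpha,\beta)$ and $F=f$ on $[a,b]$. For a neural network, depth is the number of hidden layers and width the maximal number of neurons in a hidden layer; ReLU is $\sigma(x)=\max(x,0)$. *)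

theory Defs
  imports "HOL-Analysis.Analysis"
begin

definition analytic_interval :: "(real \<Rightarrow> real) \<Rightarrow> real \<Rightarrow> real \<Rightarrow> bool" where
  "analytic_interval F \<alpha> \<beta> \<longleftrightarrow>
     (\<forall>x0 \<in> {\<alpha><..<\<beta>}. \<exists>r > 0. \<exists>c :: nat \<Rightarrow> real.
        summable (\<lambda>k. \<bar>c k\<bar> * r ^ k) \<and>
        (\<forall>x \<in> {\<alpha><..<\<beta>}. \<bar>x - x0\<bar> < r \<longrightarrow> F x = (\<Sum>k. c k * (x - x0) ^ k)))"

definition has_analytic_extension :: "(real \<Rightarrow> real) \<Rightarrow> real \<Rightarrow> real \<Rightarrow> bool" where
  "has_analytic_extension f a b \<longleftrightarrow>
     (\<exists>F \<alpha> \<beta>. \<alpha> < a \<and> b < \<beta> \<and> analytic_interval F \<alpha> \<beta> \<and> (\<forall>x \<in> {a..b}. F x = f x))"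

text \<open>A layer is an affine map given by (output dimension m, weight matrix W, bias b);
vectors are functions nat => real, only the first components are meaningful.\<close>
type_synonym layer = "nat \<times> (nat \<Rightarrow> nat \<Rightarrow> real) \<times> (nat \<Rightarrow> real)"

definition relu :: "real \<Rightarrow> real" where
  "relu x = max x 0"

definition affine_layer :: "nat \<Rightarrow> layer \<Rightarrow> (nat \<Rightarrow> real) \<Rightarrow> (nat \<Rightarrow> real)" where
  "affine_layer n l x = (case l of (m, W, b) \<Rightarrow>
      (\<lambda>i. if i < m then (\<Sum>j<n. W i j * x j) + b i else 0))"

text \<open>Evaluation: A_{L+1} o relu o A_L o ... o relu o A_1, first argument = input dimension.\<close>
fun nn_eval :: "nat \<Rightarrow> layer list \<Rightarrow> (nat \<Rightarrow> real) \<Rightarrow> (nat \<Rightarrow> real)" where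
  "nn_eval n [] x = x"
| "nn_eval n [l] x = affine_layer n l x"
| "nn_eval n (l # l' # ls) x = nn_eval (fst l) (l' # ls) (\<lambda>i. relu (affine_layer n l x i))"

definition nn_valid :: "layer list \<Rightarrow> bool" where
  "nn_valid ls \<longleftrightarrow> ls \<noteq> [] \<and> fst (last ls) = 1"

definition nn_realize :: "layer list \<Rightarrow> real \<Rightarrow> real" where
  "nn_realize ls t = nn_eval 1 ls (\<lambda>i. if i = 0 then t else 0) 0"

text \<open>Depth = number of hidden layers; width = maximal number of neurons in a hidden layer.\<close>
definition nn_depth :: "layer list \<Rightarrow> nat" where
  "nn_depth ls = length ls - 1"

definition nn_width :: "layer list \<Rightarrow> nat" where
  "nn_width ls = Max (insert 0 (set (map fst (butlast ls))))"

end

theory Submission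
  imports Defs
begin


definition lin :: "(nat \<times> real) list \<Rightarrow> (nat \<Rightarrow> real) \<Rightarrow> real" where
  "lin ps h = sum_list (map (\<lambda>(k,c). c * h k) ps)"

definition rowf :: "(nat \<times> real) list \<Rightarrow> nat \<Rightarrow> real" where
  "rowf ps j = sum_list (map (\<lambda>(k,c). if k = j then c else 0) ps)"

definition mkL :: "nat \<Rightarrow> ((nat \<times> real) list \<times> real) list \<Rightarrow> layer" where
  "mkL d rs = (d, \<lambda>i j. if i < length rs then rowf (fst (rs!i)) j else 0,
                  \<lambda>i. if i < length rs then snd (rs!i) else 0)"

lemma rowf_sum: "(\<forall>(k,c)\<in>set ps. k < n) \<Longrightarrow> (\<Sum>j<n. rowf ps j * h j) = lin ps h"
proof (induction ps)
  case Nil then show ?case by (simp add: rowf_def lin_def)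
next
  case (Cons p ps)
  obtain k c where p: "p = (k,c)" by force
  have kn: "k < n" using Cons.prems p by auto
  have "(\<Sum>j<n. rowf (p#ps) j * h j) = (\<Sum>j<n. (if k = j then c else 0) * h j) + (\<Sum>j<n. rowf ps j * h j)"
    by (simp add: p rowf_def distrib_right sum.distrib)
  also have "(\<Sum>j<n. (if k = j then c else 0) * h j) = c * h k"
  proof -
    have "\<And>j. (if k = j then c else 0) * h j = (if k = j then c * h k else 0)" by auto
    then show ?thesis using kn by (simp add: sum.delta)
  qed
  finally show ?case using Cons by (simp add: p lin_def)
qed

lemma affine_mkL:
  assumes "\<forall>r\<in>set rs. \<forall>(k,c)\<in>set (fst r). k < n"
  shows "affine_layer n (mkL d rs) h i =
     (if i < d \<and> i < length rs then lin (fst (rs!i)) h + snd (rs!i) else 0)"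
proof (cases "i < d \<and> i < length rs")
  case True
  then have "rs ! i \<in> set rs" by simp
  then have "\<forall>(k,c)\<in>set (fst (rs!i)). k < n" using assms by blast
  then show ?thesis using True rowf_sum[of "fst (rs!i)" n h]
    by (simp add: affine_layer_def mkL_def)
next
  case False then show ?thesis by (auto simp: affine_layer_def mkL_def)
qed

definition hstep :: "nat \<Rightarrow> layer \<Rightarrow> (nat \<Rightarrow> real) \<Rightarrow> (nat \<Rightarrow> real)" where
  "hstep n l h = (\<lambda>i. relu (affine_layer n l h i))"

fun hid :: "nat \<Rightarrow> layer list \<Rightarrow> (nat \<Rightarrow> real) \<Rightarrow> (nat \<Rightarrow> real)" where
  "hid n [] h = h"
| "hid n (l#ls) h = hid (fst l) ls (hstep n l h)"

lemma nn_eval_Cons: "ys \<noteq> [] \<Longrightarrow> nn_eval n (l # ys) x = nn_eval (fst l) ys (hstep n l x)"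
  by (cases ys) (auto simp: hstep_def)

lemma nn_eval_snoc: "nn_eval n (ls @ [lo]) x = affine_layer (if ls = [] then n else fst (last ls)) lo (hid n ls x)"
proof (induction ls arbitrary: n x)
  case Nil then show ?case by simp
next
  case (Cons l ls) then show ?case by (simp add: nn_eval_Cons)
qed

definition wl :: "layer list \<Rightarrow> bool" where "wl ls \<longleftrightarrow> (\<forall>l\<in>set ls. fst l = 11)"

lemma hid_append: "wl xs \<Longrightarrow> hid 11 (xs @ ys) h = hid 11 ys (hid 11 xs h)"
  by (induction xs arbitrary: h) (auto simp: wl_def)

lemma relu_diff[simp]: "relu x - relu (- x) = x" by (simp add: relu_def)
lemma relu_nonneg[simp]: "relu x \<ge> 0" by (simp add: relu_def)
lemma relu_plus[simp]: "relu (x + relu (-x)) = relu x" by (simp add: relu_def)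
lemma relu_id: "x \<ge> 0 \<Longrightarrow> relu x = x" by (simp add: relu_def)
lemma relu_relu[simp]: "relu (relu x) = relu x" by (simp add: relu_def)

lemma hstep_mkL:
  assumes "list_all (\<lambda>r. list_all (\<lambda>(k,c). k < n) (fst r)) rs"
  shows "hstep n (mkL d rs) h i = (if i < d \<and> i < length rs then relu (lin (fst (rs!i)) h + snd (rs!i)) else 0)"
proof -
  have "\<forall>r\<in>set rs. \<forall>(k,c)\<in>set (fst r). k < n" using assms by (simp add: list_all_iff)
  then show ?thesis by (simp add: hstep_def affine_mkL relu_def)
qed

definition gst :: "real \<Rightarrow> real \<Rightarrow> (nat \<Rightarrow> real) \<Rightarrow> bool" where
  "gst X G h \<longleftrightarrow> h 0 = X \<and> h 1 = relu G \<and> h 2 = relu (-G)"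

definition stdst :: "real \<Rightarrow> real \<Rightarrow> real \<Rightarrow> real \<Rightarrow> (nat \<Rightarrow> real) \<Rightarrow> bool" where
  "stdst X G u z h \<longleftrightarrow> gst X G h \<and> h 3 = relu u \<and> h 4 = relu (-u) \<and> h 5 = relu z \<and> h 6 = relu (-z)"

definition carry :: "((nat \<times> real) list \<times> real) list" where
  "carry = [([(0,1)],0), ([(1,1)],0), ([(2,1)],0), ([(3,1)],0), ([(4,1)],0)]"

definition layA :: "real \<Rightarrow> layer" where
  "layA B = mkL 11 (carry @ [([(3,1),(4,-1),(5,1/B),(6,-1/B)],0), ([(3,-1),(4,1),(5,-1/B),(6,1/B)],0),
                             ([(3,1),(4,-1),(5,-1/B),(6,1/B)],0), ([(3,-1),(4,1),(5,1/B),(6,-1/B)],0)])"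

definition Ast where
  "Ast X G u w1 w2 h \<longleftrightarrow> gst X G h \<and> h 3 = relu u \<and> h 4 = relu (-u) \<and> h 5 = relu w1 \<and> h 6 = relu (-w1)
     \<and> h 7 = relu w2 \<and> h 8 = relu (-w2)"

lemma layA_ok:
  assumes "stdst X G u z h" "X \<ge> 0"
  shows "Ast X G u (u + z/B) (u - z/B) (hstep 11 (layA B) h)"
proof -
  have e: "h 3 = u + relu (-u)" "h 5 = z + relu (-z)" "h 4 = relu (-u)" "h 6 = relu (-z)" "h 0 = X" "h (Suc 0) = relu G" "h 2 = relu (-G)"
    using assms by (auto simp: stdst_def gst_def relu_def)
  show ?thesis unfolding Ast_def layA_def
    by (simp add: hstep_mkL carry_def lin_def gst_def e relu_id assms algebra_simps diff_divide_distrib add_divide_distrib)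
qed

definition layI :: layer where
  "layI = mkL 11 (carry @ [([(5,1/2),(6,1/2)],0), ([(5,1/2),(6,1/2)],-1/2), ([(5,1/2),(6,1/2)],0),
                           ([(7,1/2),(8,1/2)],0), ([(7,1/2),(8,1/2)],-1/2), ([(7,1/2),(8,1/2)],0)])"

definition chainst where
  "chainst X G u za aa zb ab h \<longleftrightarrow> gst X G h \<and> h 3 = relu u \<and> h 4 = relu (-u) \<and>
     h 5 = za \<and> h 6 = relu (za - 1/2) \<and> h 7 = aa \<and> h 8 = zb \<and> h 9 = relu (zb - 1/2) \<and> h 10 = ab"

lemma layI_ok:
  assumes "Ast X G u w1 w2 h" "X \<ge> 0"
  shows "chainst X G u (\<bar>w1\<bar>/2) (\<bar>w1\<bar>/2) (\<bar>w2\<bar>/2) (\<bar>w2\<bar>/2) (hstep 11 layI h)"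
proof -
  have e: "h 3 = relu u" "h 5 = relu w1" "h 4 = relu (-u)" "h 6 = \<bar>w1\<bar> - relu w1" "h 7 = relu w2" "h 8 = \<bar>w2\<bar> - relu w2"
     "h 0 = X" "h (Suc 0) = relu G" "h 2 = relu (-G)"
    using assms by (auto simp: Ast_def gst_def relu_def)
  show ?thesis unfolding chainst_def layI_def
    by (simp add: hstep_mkL carry_def lin_def gst_def e relu_id assms algebra_simps)
qed

definition tent :: "real \<Rightarrow> real" where "tent z = (if z \<le> 1/2 then 2*z else 2 - 2*z)"

lemma tent_range: "0 \<le> z \<Longrightarrow> z \<le> 1 \<Longrightarrow> 0 \<le> tent z \<and> tent z \<le> 1"
  by (simp add: tent_def)

lemma tentp_range: "0 \<le> z \<Longrightarrow> z \<le> 1 \<Longrightarrow> 0 \<le> (tent^^s) z \<and> (tent^^s) z \<le> 1"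
  by (induction s) (auto simp: tent_range)

lemma relu_half: "0 \<le> z \<Longrightarrow> relu (z - 1/2) = (2*z - tent z)/4"
  by (simp add: relu_def tent_def)

fun sqa :: "nat \<Rightarrow> real \<Rightarrow> real" where
  "sqa 0 a = a"
| "sqa (Suc s) a = sqa s a - (tent^^Suc s) a / 4^Suc s"

lemma sqa_eq: "0 \<le> a \<Longrightarrow> a \<le> 1 \<Longrightarrow> sqa s a = a^2 + ((tent^^s) a - ((tent^^s) a)^2) / 4^s"
proof (induction s)
  case 0 then show ?case by simp
next
  case (Suc s)
  define y where "y = (tent^^s) a"
  have y: "0 \<le> y" "y \<le> 1" using tentp_range[OF Suc.prems] y_def by auto
  have key: "y - y^2 = tent y / 4 + (tent y - (tent y)^2)/4"
    by (auto simp: tent_def power2_eq_square field_simps)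
  have "sqa (Suc s) a = a^2 + (y - y^2)/4^s - tent y / 4^Suc s"
    using Suc by (simp add: y_def)
  also have "\<dots> = a^2 + (tent y - (tent y)^2)/4^Suc s"
    by (subst key) (simp add: field_simps)
  finally show ?case by (simp add: y_def)
qed

lemma sqa_bounds: "0 \<le> a \<Longrightarrow> a \<le> 1 \<Longrightarrow> a^2 \<le> sqa s a \<and> sqa s a \<le> a^2 + 1/(4 * 4^s)"
proof -
  assume a: "0 \<le> a" "a \<le> 1"
  define y where "y = (tent^^s) a"
  have y: "0 \<le> y" "y \<le> 1" using tentp_range[OF a] y_def by auto
  have "0 \<le> y * (1 - y)" using y by simp
  moreover have "0 \<le> (y - 1/2)^2" by simp
  ultimately have "0 \<le> y - y^2" "y - y^2 \<le> 1/4" by (auto simp: power2_eq_square algebra_simps)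
  then have b1: "0 \<le> (y - y^2)/4^s" by simp
  have b2: "(y - y^2)/4^s \<le> (1/4)/4^s"
    by (rule divide_right_mono) (use \<open>y - y^2 \<le> 1/4\<close> in auto)
  note b = b1 b2
  have "sqa s a = a^2 + (y - y^2)/4^s" using sqa_eq[OF a, of s] by (simp add: y_def)
  moreover have "(1/4)/4^s = 1/(4*4^s :: real)" by simp
  ultimately show ?thesis using b by linarith
qed



definition chainL :: "nat \<Rightarrow> layer" where
  "chainL s = mkL 11 (carry @ [([(5,2),(6,-4)],0), ([(5,2),(6,-4)],-1/2), ([(7,1),(5,-2/4^(s+1)),(6,4/4^(s+1))],0),
                              ([(8,2),(9,-4)],0), ([(8,2),(9,-4)],-1/2), ([(10,1),(8,-2/4^(s+1)),(9,4/4^(s+1))],0)])"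

lemma chainL_ok:
  assumes "chainst X G u za aa zb ab h" "X \<ge> 0" "0 \<le> za" "0 \<le> zb" "za \<le> 1" "zb \<le> 1"
    "0 \<le> aa - tent za / 4^(s+1)" "0 \<le> ab - tent zb / 4^(s+1)"
  shows "chainst X G u (tent za) (aa - tent za / 4^(s+1)) (tent zb) (ab - tent zb / 4^(s+1)) (hstep 11 (chainL s) h)"
proof -
  have e: "h 3 = relu u" "h 5 = za" "h 4 = relu (-u)" "h 6 = (2*za - tent za)/4" "h 7 = aa" "h 8 = zb"
     "h 9 = (2*zb - tent zb)/4" "h 10 = ab"
     "h 0 = X" "h (Suc 0) = relu G" "h 2 = relu (-G)"
    using assms relu_half by (auto simp: chainst_def gst_def)
  have t: "0 \<le> tent za" "0 \<le> tent zb" using tent_range assms by auto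
  have c: "lin [(0,1)] h = X" "lin [(1,1)] h = relu G" "lin [(2,1)] h = relu (-G)"
     "lin [(3,1)] h = relu u" "lin [(4,1)] h = relu (-u)" by (simp_all add: lin_def e)
  have v: "lin [(5,2),(6,-4)] h = tent za" "lin [(8,2),(9,-4)] h = tent zb"
    "lin [(7,1),(5,-2/4^(s+1)),(6,4/4^(s+1))] h = aa - tent za / 4^(s+1)"
    "lin [(10,1),(8,-2/4^(s+1)),(9,4/4^(s+1))] h = ab - tent zb / 4^(s+1)"
    by (simp_all add: lin_def e field_simps)
  show ?thesis unfolding chainst_def chainL_def
    using assms t
    by (simp add: hstep_mkL carry_def c[simplified] v[simplified] gst_def relu_id)
qed

fun chainLs :: "nat \<Rightarrow> layer list" where
  "chainLs 0 = []"
| "chainLs (Suc s) = chainLs s @ [chainL s]"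

lemma fst_mkL[simp]: "fst (mkL d rs) = d" by (simp add: mkL_def)

lemma wl_chainLs: "wl (chainLs m)"
  by (induction m) (auto simp: wl_def chainL_def)

lemma chain_ok:
  assumes "chainst X G u a a b b h" "X \<ge> 0" "0 \<le> a" "a \<le> 1" "0 \<le> b" "b \<le> 1"
  shows "chainst X G u ((tent^^m) a) (sqa m a) ((tent^^m) b) (sqa m b) (hid 11 (chainLs m) h)"
proof (induction m)
  case 0 then show ?case using assms by simp
next
  case (Suc m)
  have ra: "0 \<le> (tent^^m) a" "(tent^^m) a \<le> 1" using tentp_range assms by auto
  have rb: "0 \<le> (tent^^m) b" "(tent^^m) b \<le> 1" using tentp_range assms by auto
  have sa: "0 \<le> sqa m a - tent ((tent^^m) a) / 4^(m+1)"
    using sqa_bounds[of a "Suc m"] assms by simp (smt (verit) zero_le_power2)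
  have sb: "0 \<le> sqa m b - tent ((tent^^m) b) / 4^(m+1)"
    using sqa_bounds[of b "Suc m"] assms by simp (smt (verit) zero_le_power2)
  have "hid 11 (chainLs (Suc m)) h = hstep 11 (chainL m) (hid 11 (chainLs m) h)"
    by (simp add: hid_append wl_chainLs chainL_def)
  then show ?case using chainL_ok[OF Suc.IH assms(2) ra(1) rb(1) ra(2) rb(2) sa sb] by simp
qed

definition layU :: "real \<Rightarrow> real \<Rightarrow> layer" where
  "layU B d = mkL 11 (carry @ [([(7,B),(10,-B)], d), ([(7,-B),(10,B)], -d)])"

lemma layU_ok:
  assumes "chainst X G u za aa zb ab h" "X \<ge> 0"
  shows "stdst X G u (B*(aa - ab) + d) (hstep 11 (layU B d) h)"
proof -
  have e: "h 3 = relu u" "h 4 = relu (-u)" "h 7 = aa" "h 10 = ab"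
     "h 0 = X" "h (Suc 0) = relu G" "h 2 = relu (-G)"
    using assms by (auto simp: chainst_def gst_def)
  have c: "lin [(0,1)] h = X" "lin [(1,1)] h = relu G" "lin [(2,1)] h = relu (-G)"
     "lin [(3,1)] h = relu u" "lin [(4,1)] h = relu (-u)" by (simp_all add: lin_def e)
  have v: "lin [(7,B),(10,-B)] h = B*(aa - ab)" "lin [(7,-B),(10,B)] h = - (B*(aa - ab))"
    by (simp_all add: lin_def e algebra_simps)
  show ?thesis unfolding stdst_def layU_def
    using assms
    by (simp add: hstep_mkL carry_def c[simplified] v[simplified] gst_def relu_id)
qed

definition mblock :: "real \<Rightarrow> nat \<Rightarrow> real \<Rightarrow> layer list" where
  "mblock B m d = [layA B, layI] @ chainLs m @ [layU B d]"

definition Mu :: "real \<Rightarrow> nat \<Rightarrow> real \<Rightarrow> real \<Rightarrow> real" where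
  "Mu B m u z = B * (sqa m (\<bar>u + z/B\<bar>/2) - sqa m (\<bar>u - z/B\<bar>/2))"

lemma wl_mblock: "wl (mblock B m d)"
  using wl_chainLs by (auto simp: wl_def mblock_def layA_def layI_def layU_def)

lemma mblock_ok:
  assumes "stdst X G u z h" "X \<ge> 0" "\<bar>u\<bar> \<le> 1" "\<bar>z\<bar> \<le> B" "B > 0"
  shows "stdst X G u (Mu B m u z + d) (hid 11 (mblock B m d) h)"
proof -
  have v: "\<bar>z/B\<bar> \<le> 1" using assms by (simp add: abs_divide)
  have r1: "0 \<le> \<bar>u + z/B\<bar>/2" "\<bar>u + z/B\<bar>/2 \<le> 1"
    using abs_triangle_ineq[of u "z/B"] v assms(3) by simp_all
  have r2: "0 \<le> \<bar>u - z/B\<bar>/2" "\<bar>u - z/B\<bar>/2 \<le> 1"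
    using abs_triangle_ineq4[of u "z/B"] v assms(3) by simp_all
  have h1: "Ast X G u (u + z/B) (u - z/B) (hstep 11 (layA B) h)" by (rule layA_ok[OF assms(1,2)])
  have h2: "chainst X G u (\<bar>u + z/B\<bar>/2) (\<bar>u + z/B\<bar>/2) (\<bar>u - z/B\<bar>/2) (\<bar>u - z/B\<bar>/2)
      (hstep 11 layI (hstep 11 (layA B) h))" by (rule layI_ok[OF h1 assms(2)])
  note h3 = chain_ok[OF h2 assms(2) r1 r2, of m]
  have eq: "hid 11 (mblock B m d) h = hstep 11 (layU B d) (hid 11 (chainLs m) (hstep 11 layI (hstep 11 (layA B) h)))"
    unfolding mblock_def by (simp add: hid_append wl_chainLs layA_def layI_def layU_def)
  show ?thesis unfolding eq Mu_def by (rule layU_ok[OF h3 assms(2)])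
qed

lemma Mu_approx:
  assumes "\<bar>u\<bar> \<le> 1" "\<bar>z\<bar> \<le> B" "B > 0"
  shows "\<bar>Mu B m u z - u * z\<bar> \<le> B / (4 * 4^m)"
proof -
  define v where "v = z / B"
  have v: "\<bar>v\<bar> \<le> 1" using assms by (simp add: abs_divide v_def)
  define a where "a = \<bar>u + v\<bar>/2"
  define b where "b = \<bar>u - v\<bar>/2"
  have r: "0 \<le> a" "a \<le> 1" "0 \<le> b" "b \<le> 1"
    using abs_triangle_ineq[of u v] abs_triangle_ineq4[of u v] v assms(1) unfolding a_def b_def by simp_all
  have a2: "a^2 = (u+v)^2/4" by (simp add: a_def power_divide)
  have b2: "b^2 = (u-v)^2/4" by (simp add: b_def power_divide)
  have ab: "a^2 - b^2 = u * v" unfolding a2 b2 by (simp add: power2_eq_square field_simps)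
  have "\<bar>sqa m a - sqa m b - (a^2 - b^2)\<bar> \<le> 1 / (4 * 4^m)"
    using sqa_bounds[OF r(1,2), of m] sqa_bounds[OF r(3,4), of m] by linarith
  then have "\<bar>sqa m a - sqa m b - u * v\<bar> \<le> 1 / (4 * 4^m)" using ab by simp
  then have "B * \<bar>sqa m a - sqa m b - u * v\<bar> \<le> B * (1 / (4 * 4^m))"
    using assms(3) by (intro mult_left_mono) auto
  moreover have "u * z = B * (u * v)" using assms(3) by (simp add: v_def)
  then have "Mu B m u z - u * z = B * (sqa m a - sqa m b - u * v)"
    unfolding Mu_def a_def b_def v_def by (simp add: right_diff_distrib)
  then have "B * \<bar>sqa m a - sqa m b - u * v\<bar> = \<bar>Mu B m u z - u * z\<bar>"
    using assms(3) by (simp add: abs_mult)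
  ultimately show ?thesis by simp
qed



fun hblocks :: "real \<Rightarrow> nat \<Rightarrow> real list \<Rightarrow> layer list" where
  "hblocks B m [] = []"
| "hblocks B m (d#ds) = hblocks B m ds @ mblock B m d"

definition hornerA :: "real \<Rightarrow> nat \<Rightarrow> real list \<Rightarrow> real \<Rightarrow> real" where
  "hornerA B m ds u = foldr (\<lambda>d z. Mu B m u z + d) ds 0"

definition hornerE :: "real list \<Rightarrow> real \<Rightarrow> real" where
  "hornerE ds u = foldr (\<lambda>d z. u * z + d) ds 0"

lemma wl_append: "wl xs \<Longrightarrow> wl ys \<Longrightarrow> wl (xs @ ys)" by (auto simp: wl_def)
lemma wl_Nil: "wl []" by (simp add: wl_def)

lemma wl_hblocks: "wl (hblocks B m ds)"
  by (induction ds) (simp_all add: wl_Nil wl_append wl_mblock)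

lemma length_mblock: "length (mblock B m d) = m + 3"
proof -
  have "length (chainLs m) = m" by (induction m) auto
  then show ?thesis by (simp add: mblock_def)
qed

lemma length_hblocks: "length (hblocks B m ds) = length ds * (m + 3)"
  by (induction ds) (auto simp: length_mblock)

lemma hornerE_bound: "\<bar>u\<bar> \<le> 1 \<Longrightarrow> \<bar>hornerE ds u\<bar> \<le> sum_list (map abs ds)"
proof (induction ds)
  case Nil then show ?case by (simp add: hornerE_def)
next
  case (Cons d ds)
  have "\<bar>u * hornerE ds u\<bar> \<le> \<bar>hornerE ds u\<bar>"
    using Cons.prems by (simp add: abs_mult mult_left_le_one_le)
  then show ?case using Cons abs_triangle_ineq[of "u * hornerE ds u" d] by (simp add: hornerE_def)
qed

lemma hornerE_sum: "hornerE ds u = (\<Sum>k<length ds. ds!k * u^k)"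
proof (induction ds)
  case Nil then show ?case by (simp add: hornerE_def)
next
  case (Cons d ds)
  have "hornerE (d#ds) u = u * hornerE ds u + d" by (simp add: hornerE_def)
  also have "\<dots> = (\<Sum>k<length ds. ds!k * u^(Suc k)) + d"
    using Cons by (simp add: sum_distrib_left algebra_simps)
  also have "\<dots> = (\<Sum>k<Suc (length ds). (d#ds)!k * u^k)"
    by (subst sum.lessThan_Suc_shift) (simp add: algebra_simps)
  finally show ?case by simp
qed

lemma horner_ok:
  assumes "stdst X G u 0 h" "X \<ge> 0" "\<bar>u\<bar> \<le> 1" "B > 0"
    "sum_list (map abs ds) \<le> S0" "S0 + real (length ds) * (B/(4*4^m)) \<le> B"
  shows "stdst X G u (hornerA B m ds u) (hid 11 (hblocks B m ds) h) \<and>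
    \<bar>hornerA B m ds u - hornerE ds u\<bar> \<le> real (length ds) * (B/(4*4^m))"
  using assms(5,6)
proof (induction ds)
  case Nil then show ?case using assms by (simp add: hornerA_def hornerE_def)
next
  case (Cons d ds)
  define e where "e = B/(4*4^m)"
  have e0: "e \<ge> 0" using assms by (simp add: e_def)
  have s1: "sum_list (map abs ds) \<le> S0" using Cons.prems by simp
  have "S0 + (1 + real (length ds)) * e \<le> B" using Cons.prems unfolding e_def[symmetric] by simp
  moreover have "(1 + real (length ds)) * e = e + real (length ds) * e" by (simp add: algebra_simps)
  ultimately have s2: "S0 + real (length ds) * e \<le> B" using e0 by linarith
  note IH = Cons.IH[OF s1 s2[unfolded e_def]]
  define z where "z = hornerA B m ds u"
  define p where "p = hornerE ds u"
  have zp: "\<bar>z - p\<bar> \<le> real (length ds) * e" using IH by (simp add: z_def p_def e_def)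
  have pb: "\<bar>p\<bar> \<le> S0" using hornerE_bound[OF assms(3), of ds] s1 by (simp add: p_def)
  have zB: "\<bar>z\<bar> \<le> B" using zp pb s2 by linarith
  have st: "stdst X G u z (hid 11 (hblocks B m ds) h)" using IH by (simp add: z_def)
  have st2: "stdst X G u (Mu B m u z + d) (hid 11 (mblock B m d) (hid 11 (hblocks B m ds) h))"
    by (rule mblock_ok[OF st assms(2,3) zB assms(4)])
  have M: "\<bar>Mu B m u z - u * z\<bar> \<le> e" using Mu_approx[OF assms(3) zB assms(4), of m] by (simp add: e_def)
  have "\<bar>u * (z - p)\<bar> \<le> \<bar>z - p\<bar>" using assms(3) by (simp add: abs_mult mult_left_le_one_le)
  then have "\<bar>(Mu B m u z + d) - (u * p + d)\<bar> \<le> e + real (length ds) * e"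
    using M zp by (simp add: algebra_simps)
  moreover have "hornerA B m (d#ds) u = Mu B m u z + d" by (simp add: hornerA_def z_def)
  moreover have "hornerE (d#ds) u = u * p + d" by (simp add: hornerE_def p_def)
  moreover have "hid 11 (hblocks B m (d#ds)) h = hid 11 (mblock B m d) (hid 11 (hblocks B m ds) h)"
    by (simp add: hid_append wl_hblocks)
  moreover have "real (length (d#ds)) * (B/(4*4^m)) = e + real (length ds) * e" by (simp add: e_def algebra_simps add_divide_distrib)
  ultimately show ?case using st2 by simp
qed

definition P1 :: "real \<Rightarrow> real \<Rightarrow> real \<Rightarrow> layer" where
  "P1 a l r = mkL 11 [([(0,1)],0), ([(1,1)],0), ([(2,1)],0), ([(0,1)], a - l), ([(0,1)], a - r)]"

definition P2 :: "real \<Rightarrow> real \<Rightarrow> real \<Rightarrow> layer" where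
  "P2 l c s = mkL 11 [([(0,1)],0), ([(1,1)],0), ([(2,1)],0), ([(3,1/s),(4,-1/s)], (l - c)/s),
      ([(3,-1/s),(4,1/s)], -((l - c)/s)), ([],0), ([],0)]"

definition P3 :: "real \<Rightarrow> layer" where
  "P3 fl = mkL 11 [([(0,1)],0), ([(1,1),(2,-1),(5,1),(6,-1)], -fl), ([(1,-1),(2,1),(5,-1),(6,1)], fl)]"

lemma P1_ok:
  assumes "gst X G h" "X \<ge> 0"
  shows "gst X G (hstep 11 (P1 a l r) h) \<and> hstep 11 (P1 a l r) h 3 = relu (X + a - l)
     \<and> hstep 11 (P1 a l r) h 4 = relu (X + a - r)"
proof -
  have e: "h 0 = X" "h (Suc 0) = relu G" "h 2 = relu (-G)" using assms by (auto simp: gst_def)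
  have c: "lin [(0,1)] h = X" "lin [(1,1)] h = relu G" "lin [(2,1)] h = relu (-G)"
     by (simp_all add: lin_def e)
  show ?thesis unfolding gst_def P1_def
    using assms by (simp add: hstep_mkL c[simplified] relu_id algebra_simps)
qed

lemma P2_ok:
  assumes "gst X G h" "X \<ge> 0" "h 3 = relu (X + a - l)" "h 4 = relu (X + a - r)" "s > 0"
  shows "stdst X G ((l + relu (X + a - l) - relu (X + a - r) - c)/s) 0 (hstep 11 (P2 l c s) h)"
proof -
  have e: "h 0 = X" "h (Suc 0) = relu G" "h 2 = relu (-G)" using assms by (auto simp: gst_def)
  have c: "lin [(0,1)] h = X" "lin [(1,1)] h = relu G" "lin [(2,1)] h = relu (-G)"
     by (simp_all add: lin_def e)
  have v: "lin [(3,1/s),(4,-1/s)] h + (l - c)/s = (l + relu (X + a - l) - relu (X + a - r) - c)/s"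
      "lin [(3,-1/s),(4,1/s)] h + -((l - c)/s) = - ((l + relu (X + a - l) - relu (X + a - r) - c)/s)"
    using assms by (simp_all add: lin_def field_simps)
  have w: "lin [] h = 0" by (simp add: lin_def)
  show ?thesis unfolding stdst_def gst_def P2_def
    using assms by (simp add: hstep_mkL c[simplified] v[simplified] w relu_id)
qed

lemma P3_ok:
  assumes "stdst X G u z h" "X \<ge> 0"
  shows "gst X (G + z - fl) (hstep 11 (P3 fl) h)"
proof -
  have e: "h 0 = X" "h (Suc 0) = G + relu (-G)" "h 2 = relu (-G)" "h 5 = z + relu (-z)" "h 6 = relu (-z)"
    using assms by (auto simp: gst_def stdst_def relu_def)
  have c: "lin [(0,1)] h = X" by (simp_all add: lin_def e)
  have v: "lin [(1,1),(2,-1),(5,1),(6,-1)] h + -fl = G + z - fl"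
      "lin [(1,-1),(2,1),(5,-1),(6,1)] h + fl = fl - (G + z)"
    by (simp_all add: lin_def e)
  have r: "relu (- G - z + fl) = relu (fl - (G + z))" by (simp add: algebra_simps)
  show ?thesis unfolding gst_def P3_def
    using assms by (simp add: hstep_mkL c[simplified] v[simplified] relu_id r)
qed



definition piece :: "real \<Rightarrow> real \<Rightarrow> real \<Rightarrow> real \<Rightarrow> real \<Rightarrow> real \<Rightarrow> real \<Rightarrow> nat \<Rightarrow> real list \<Rightarrow> layer list" where
  "piece a l r c s fl B m ds = [P1 a l r, P2 l c s] @ hblocks B m ds @ [P3 fl]"

definition uval :: "real \<Rightarrow> real \<Rightarrow> real \<Rightarrow> real \<Rightarrow> real \<Rightarrow> real \<Rightarrow> real" where
  "uval a l r c s X = (l + relu (X + a - l) - relu (X + a - r) - c)/s"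

lemma wl_piece: "wl (piece a l r c s fl B m ds)"
  by (simp add: piece_def wl_def P1_def P2_def P3_def) (use wl_hblocks in \<open>auto simp: wl_def\<close>)

lemma length_piece: "length (piece a l r c s fl B m ds) = 3 + length ds * (m + 3)"
  by (simp add: piece_def length_hblocks)

lemma piece_ok:
  assumes "gst X G h" "X \<ge> 0" "s > 0" "\<bar>uval a l r c s X\<bar> \<le> 1" "B > 0"
    "sum_list (map abs ds) \<le> S0" "S0 + real (length ds) * (B/(4*4^m)) \<le> B"
  shows "gst X (G + hornerA B m ds (uval a l r c s X) - fl) (hid 11 (piece a l r c s fl B m ds) h)"
proof -
  have p1: "gst X G (hstep 11 (P1 a l r) h)" "hstep 11 (P1 a l r) h 3 = relu (X + a - l)"
     "hstep 11 (P1 a l r) h 4 = relu (X + a - r)" using P1_ok[OF assms(1,2)] by auto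
  have p2: "stdst X G (uval a l r c s X) 0 (hstep 11 (P2 l c s) (hstep 11 (P1 a l r) h))"
    unfolding uval_def by (rule P2_ok[OF p1(1) assms(2) p1(2,3) assms(3)])
  note hb = horner_ok[OF p2 assms(2,4,5,6,7)]
  have "hid 11 (piece a l r c s fl B m ds) h =
     hstep 11 (P3 fl) (hid 11 (hblocks B m ds) (hstep 11 (P2 l c s) (hstep 11 (P1 a l r) h)))"
    unfolding piece_def by (simp add: hid_append wl_hblocks P1_def P2_def)
  then show ?thesis using P3_ok[OF conjunct1[OF hb] assms(2)] by simp
qed

lemma concat_ok:
  assumes "\<And>j. j < K \<Longrightarrow> wl (pc j)"
    "\<And>j G h. j < K \<Longrightarrow> gst X G h \<Longrightarrow> gst X (G + \<delta> j) (hid 11 (pc j) h)"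
    "gst X G h"
  shows "gst X (G + (\<Sum>j<K. \<delta> j)) (hid 11 (concat (map pc [0..<K])) h) \<and> wl (concat (map pc [0..<K]))"
  using assms
proof (induction K)
  case 0 then show ?case by (simp add: wl_Nil)
next
  case (Suc K)
  have IH: "gst X (G + (\<Sum>j<K. \<delta> j)) (hid 11 (concat (map pc [0..<K])) h) \<and> wl (concat (map pc [0..<K]))"
    using Suc by simp
  have "gst X (G + (\<Sum>j<K. \<delta> j) + \<delta> K) (hid 11 (pc K) (hid 11 (concat (map pc [0..<K])) h))"
    using Suc.prems(2)[of K] IH by simp
  then show ?case using IH Suc.prems(1)[of K] by (simp add: hid_append wl_append add.assoc)
qed

definition inL :: "real \<Rightarrow> real \<Rightarrow> layer" where
  "inL a fa = mkL 11 [([(0,1)], -a), ([], fa), ([], -fa)]"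

definition outL :: layer where
  "outL = mkL 1 [([(1,1),(2,-1)],0)]"

definition netw :: "real \<Rightarrow> real \<Rightarrow> layer list \<Rightarrow> layer list" where
  "netw a fa body = inL a fa # body @ [outL]"

lemma netw_realize:
  assumes "wl body" "\<And>h. gst (x - a) fa h \<Longrightarrow> gst (x - a) Gf (hid 11 body h)" "x \<ge> a"
  shows "nn_realize (netw a fa body) x = Gf"
proof -
  define x0 :: "nat \<Rightarrow> real" where "x0 = (\<lambda>i. if i = 0 then x else 0)"
  have "gst (x - a) fa (hstep 1 (inL a fa) x0)"
    unfolding gst_def inL_def using assms(3) by (simp add: hstep_mkL lin_def x0_def relu_id)
  then have g: "gst (x - a) Gf (hid 11 body (hstep 1 (inL a fa) x0))" by (rule assms(2))
  have l: "(if inL a fa # body = [] then 1 else fst (last (inL a fa # body))) = 11"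
    using assms(1) by (cases body) (auto simp: inL_def wl_def)
  have "nn_realize (netw a fa body) x = affine_layer 11 outL (hid 11 body (hstep 1 (inL a fa) x0)) 0"
    unfolding nn_realize_def netw_def x0_def[symmetric]
    using nn_eval_snoc[of 1 "inL a fa # body" outL x0] l by (simp add: inL_def)
  also have "\<dots> = Gf" using g unfolding outL_def gst_def
    by (subst affine_mkL) (auto simp: lin_def)
  finally show ?thesis .
qed

lemma netw_props:
  assumes "wl body"
  shows "nn_valid (netw a fa body)" "nn_depth (netw a fa body) = length body + 1"
    "nn_width (netw a fa body) = 11"
proof -
  show "nn_valid (netw a fa body)" by (simp add: nn_valid_def netw_def outL_def)
  show "nn_depth (netw a fa body) = length body + 1" by (simp add: nn_depth_def netw_def)
  have "set (map fst (butlast (netw a fa body))) = {11}"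
    using assms by (auto simp: netw_def butlast_append inL_def wl_def)
  then show "nn_width (netw a fa body) = 11" by (simp add: nn_width_def)
qed



lemma trunc_bound:
  fixes d :: "nat \<Rightarrow> real"
  assumes sd: "summable (\<lambda>k. \<bar>d k\<bar> * 2^k)" and u: "\<bar>u\<bar> \<le> 1"
  shows "\<bar>(\<Sum>k. d k * u^k) - (\<Sum>k<n. d k * u^k)\<bar> \<le> (\<Sum>k. \<bar>d k\<bar> * 2^k) / 2^n"
proof -
  define g where "g = (\<lambda>k. d k * u^k)"
  define p where "p = (\<lambda>k. \<bar>d k\<bar> * (2::real)^k)"
  have gp: "\<bar>g k\<bar> \<le> p k" for k
  proof -
    have "\<bar>u\<bar>^k \<le> 1" using u by (simp add: power_le_one)
    also have "(1::real) \<le> 2^k" by simp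
    finally show ?thesis unfolding g_def p_def abs_mult power_abs by (intro mult_left_mono) auto
  qed
  have sp: "summable p" using sd by (simp add: p_def)
  have sag: "summable (\<lambda>k. \<bar>g k\<bar>)" by (rule summable_comparison_test[OF _ sp]) (use gp in auto)
  have sg: "summable g" using sag summable_rabs_cancel by blast
  have e1: "suminf g - (\<Sum>k<n. g k) = (\<Sum>k. g (k + n))" using suminf_split_initial_segment[OF sg, of n] by simp
  have sagn: "summable (\<lambda>k. \<bar>g (k + n)\<bar>)" using summable_ignore_initial_segment[OF sag, of n] by simp
  have "\<bar>\<Sum>k. g (k + n)\<bar> \<le> (\<Sum>k. \<bar>g (k + n)\<bar>)" by (rule summable_rabs[OF sagn])
  also have "\<dots> \<le> (\<Sum>k. p (k + n) / 2^n)"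
  proof (rule suminf_le)
    show "\<bar>g (k + n)\<bar> \<le> p (k + n) / 2^n" for k
    proof -
      have "\<bar>g (k+n)\<bar> \<le> \<bar>d (k+n)\<bar> * 2^k"
      proof -
        have "\<bar>u\<bar>^(k+n) \<le> 1" using u by (simp add: power_le_one)
        also have "(1::real) \<le> 2^k" by simp
        finally show ?thesis unfolding g_def abs_mult power_abs by (intro mult_left_mono) auto
      qed
      also have "\<dots> = p (k + n) / 2^n" by (simp add: p_def power_add)
      finally show ?thesis .
    qed
    show "summable (\<lambda>k. \<bar>g (k + n)\<bar>)" by (rule sagn)
    show "summable (\<lambda>k. p (k + n) / 2^n)"
      using summable_ignore_initial_segment[OF sp, of n] by (intro summable_divide) simp
  qed
  also have "\<dots> = (\<Sum>k. p (k + n)) / 2^n"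
    using summable_ignore_initial_segment[OF sp, of n] by (intro suminf_divide) simp
  also have "(\<Sum>k. p (k + n)) \<le> suminf p"
  proof -
    have "suminf p = (\<Sum>k. p (k + n)) + (\<Sum>k<n. p k)" using suminf_split_initial_segment[OF sp, of n] by simp
    moreover have "(\<Sum>k<n. p k) \<ge> 0" by (intro sum_nonneg) (simp add: p_def)
    ultimately show ?thesis by linarith
  qed
  then have "(\<Sum>k. p (k + n)) / 2^n \<le> suminf p / 2^n" by (intro divide_right_mono) auto
  finally show ?thesis using e1 by (simp add: g_def p_def)
qed

definition clampv :: "real \<Rightarrow> real \<Rightarrow> real \<Rightarrow> real" where
  "clampv x l r = l + max (x - l) 0 - max (x - r) 0"

lemma telescope:
  fixes t :: "nat \<Rightarrow> real" and g :: "real \<Rightarrow> real"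
  assumes "\<And>j. t j \<le> t (Suc j)" "t 0 \<le> x"
  shows "(\<Sum>j<N. g (clampv x (t j) (t (Suc j))) - g (t j)) = g (min x (t N)) - g (t 0)"
proof (induction N)
  case 0 then show ?case using assms by (simp add: min_def)
next
  case (Suc N)
  have m: "t N \<le> t (Suc N)" by (rule assms(1))
  show ?case
  proof (cases "x \<le> t N")
    case True
    then have "clampv x (t N) (t (Suc N)) = t N" using m by (simp add: clampv_def)
    moreover have "min x (t (Suc N)) = x" "min x (t N) = x" using True m by auto
    ultimately show ?thesis using Suc by simp
  next
    case False
    then have "clampv x (t N) (t (Suc N)) = min x (t (Suc N))" using m by (simp add: clampv_def min_def max_def)
    moreover have "min x (t N) = t N" using False by auto
    ultimately show ?thesis using Suc by simp
  qed
qed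

lemma clampv_range: "l \<le> r \<Longrightarrow> l \<le> clampv x l r \<and> clampv x l r \<le> r"
  by (simp add: clampv_def max_def)

lemma n_le_2pow: "real n \<le> 2^n"
proof -
  have "n < 2^n" by (rule less_exp)
  then have "real n < real (2^n)" by linarith
  then show ?thesis by simp
qed

lemma n_over_4pow: "real n / 4^n \<le> 1 / (2::real)^n"
proof -
  have "(4::real)^n = 2^n * 2^n" by (simp add: power_mult_distrib[symmetric])
  then show ?thesis using n_le_2pow[of n] by (simp add: field_simps)
qed

lemma inv2pow_exp:
  assumes "L \<ge> (0::real)"
  shows "1 / 2 ^ (nat \<lfloor>sqrt L\<rfloor>) \<le> 2 * exp (- ln 2 * sqrt L)"
proof -
  define n where "n = nat \<lfloor>sqrt L\<rfloor>"
  have n1: "sqrt L \<le> real n + 1" unfolding n_def using assms by linarith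
  have "(2::real)^n = exp (real n * ln 2)" by (simp add: exp_of_nat_mult)
  then have "1 / 2^n = exp (- (real n * ln 2))" by (simp add: exp_minus field_simps)
  also have "\<dots> \<le> exp (ln 2 - ln 2 * sqrt L)"
  proof -
    have "ln 2 * sqrt L \<le> ln 2 * (real n + 1)" using n1 by (intro mult_left_mono) auto
    then show ?thesis by (simp add: algebra_simps)
  qed
  also have "\<dots> = 2 * exp (- ln 2 * sqrt L)" by (simp add: exp_diff exp_minus field_simps)
  finally show ?thesis by (simp add: n_def)
qed



lemma uval_clamp: "uval a l r c s (x - a) = (clampv x l r - c)/s"
  by (simp add: uval_def clampv_def relu_def)

lemma realize_trivial: "nn_realize [mkL 1 []] x = 0"
  by (simp add: nn_realize_def affine_layer_def mkL_def)

lemma trivial_props: "nn_valid [mkL 1 []]" "nn_depth [mkL 1 []] = 0" "nn_width [mkL 1 []] = 0"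
  by (simp_all add: nn_valid_def nn_depth_def nn_width_def)

lemma sum_list_upt0: "sum_list (map g [0..<n]) = (\<Sum>k<n. g k :: real)"
  by (induction n) auto

locale pw =
  fixes f :: "real \<Rightarrow> real" and a b :: real and K :: nat and t cj sj :: "nat \<Rightarrow> real"
    and dd :: "nat \<Rightarrow> nat \<Rightarrow> real"
  assumes K: "K > 0"
    and tmono: "\<And>j. t j \<le> t (Suc j)"
    and t0: "t 0 = a" and tK: "t K = b"
    and spos: "\<And>j. j < K \<Longrightarrow> sj j > 0"
    and near: "\<And>j y. j < K \<Longrightarrow> t j \<le> y \<Longrightarrow> y \<le> t (Suc j) \<Longrightarrow> \<bar>y - cj j\<bar> < sj j"
    and fser: "\<And>j y. j < K \<Longrightarrow> t j \<le> y \<Longrightarrow> y \<le> t (Suc j) \<Longrightarrow> f y = (\<Sum>k. dd j k * ((y - cj j)/sj j)^k)"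
    and summ: "\<And>j. j < K \<Longrightarrow> summable (\<lambda>k. \<bar>dd j k\<bar> * 2^k)"
begin

definition Smax where "Smax = (\<Sum>j<K. \<Sum>k. \<bar>dd j k\<bar> * 2^k)"
definition BB where "BB = 2 * Smax + 1"
definition E0 where "E0 = real K * (Smax + BB)"
definition ds where "ds n j = map (dd j) [0..<n]"
definition body where "body n = concat (map (\<lambda>j. piece a (t j) (t (Suc j)) (cj j) (sj j) (f (t j)) BB n (ds n j)) [0..<K])"
definition uj where "uj j x = uval a (t j) (t (Suc j)) (cj j) (sj j) (x - a)"
definition del where "del n x j = hornerA BB n (ds n j) (uj j x) - f (t j)"

lemma Sj_le: "j < K \<Longrightarrow> (\<Sum>k. \<bar>dd j k\<bar> * 2^k) \<le> Smax"
  unfolding Smax_def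
  by (rule member_le_sum[of j "{..<K}" "\<lambda>j. \<Sum>k. \<bar>dd j k\<bar> * 2^k"]) (auto intro!: suminf_nonneg summ)

lemma Smax_nonneg: "Smax \<ge> 0"
  unfolding Smax_def by (auto intro!: sum_nonneg suminf_nonneg summ)

lemma BB_pos: "BB > 0" using Smax_nonneg by (simp add: BB_def)

lemma uj_bound:
  assumes "j < K" "a \<le> x"
  shows "\<bar>uj j x\<bar> < 1" "t j \<le> clampv x (t j) (t (Suc j))" "clampv x (t j) (t (Suc j)) \<le> t (Suc j)"
    "uj j x = (clampv x (t j) (t (Suc j)) - cj j) / sj j"
proof -
  show c: "t j \<le> clampv x (t j) (t (Suc j))" "clampv x (t j) (t (Suc j)) \<le> t (Suc j)"
    using clampv_range[OF tmono[of j]] by auto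
  show u: "uj j x = (clampv x (t j) (t (Suc j)) - cj j) / sj j" by (simp add: uj_def uval_clamp)
  have "\<bar>clampv x (t j) (t (Suc j)) - cj j\<bar> < sj j" by (rule near[OF assms(1) c])
  then show "\<bar>uj j x\<bar> < 1" using spos[OF assms(1)] by (simp add: u abs_divide)
qed

lemma dsabs: "j < K \<Longrightarrow> sum_list (map abs (ds n j)) \<le> Smax"
proof -
  assume j: "j < K"
  have "sum_list (map abs (ds n j)) = (\<Sum>k<n. \<bar>dd j k\<bar>)"
    unfolding ds_def map_map sum_list_upt0 by simp
  also have "\<dots> \<le> (\<Sum>k<n. \<bar>dd j k\<bar> * 2^k)"
    by (intro sum_mono) (use mult_left_mono[of 1 "2^_" "\<bar>dd j _\<bar>"] in simp)
  also have "\<dots> \<le> (\<Sum>k. \<bar>dd j k\<bar> * 2^k)" by (intro sum_le_suminf summ[OF j]) auto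
  also have "\<dots> \<le> Smax" by (rule Sj_le[OF j])
  finally show ?thesis .
qed

lemma cond: "Smax + real (length (ds n j)) * (BB / (4 * 4^n)) \<le> BB"
proof -
  have "real (length (ds n j)) * (BB / (4 * 4^n)) = BB / 4 * (real n / 4^n)" by (simp add: ds_def field_simps)
  also have "\<dots> \<le> BB / 4 * 1"
  proof (rule mult_left_mono)
    have "real n / 4^n \<le> 1 / 2^n" by (rule n_over_4pow)
    also have "\<dots> \<le> 1" by simp
    finally show "real n / 4^n \<le> 1" .
  qed (use BB_pos in simp)
  finally have "real (length (ds n j)) * (BB / (4 * 4^n)) \<le> BB / 4" by simp
  moreover have "Smax + BB/4 \<le> BB" using Smax_nonneg by (simp add: BB_def)
  ultimately show ?thesis by linarith
qed

lemma realize: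
  assumes "a \<le> x"
  shows "nn_realize (netw a (f a) (body n)) x = f a + (\<Sum>j<K. del n x j)"
proof -
  let ?pc = "\<lambda>j. piece a (t j) (t (Suc j)) (cj j) (sj j) (f (t j)) BB n (ds n j)"
  have X: "x - a \<ge> 0" using assms by simp
  have *: "gst (x - a) (G + (\<Sum>j<K. del n x j)) (hid 11 (concat (map ?pc [0..<K])) h) \<and> wl (concat (map ?pc [0..<K]))"
    if "gst (x - a) G h" for G h
  proof -
    have w: "\<And>j. j < K \<Longrightarrow> wl (?pc j)" by (rule wl_piece)
    have p: "gst (x - a) (G' + del n x j) (hid 11 (?pc j) h')" if j: "j < K" and g: "gst (x - a) G' h'" for j G' h'
    proof -
      have "gst (x - a) (G' + hornerA BB n (ds n j) (uval a (t j) (t (Suc j)) (cj j) (sj j) (x - a)) - f (t j))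
              (hid 11 (?pc j) h')"
        by (rule piece_ok[OF g X spos[OF j] less_imp_le[OF uj_bound(1)[OF j assms, unfolded uj_def]] BB_pos dsabs[OF j] cond])
      then show ?thesis by (simp add: del_def uj_def algebra_simps)
    qed
    show ?thesis by (rule concat_ok[OF w p that])
  qed
  have wb: "wl (body n)" using wl_piece[unfolded wl_def] unfolding body_def wl_def by auto
  show ?thesis
    by (rule netw_realize[OF wb _ assms]) (use * in \<open>simp add: body_def\<close>)
qed

lemma err:
  assumes "a \<le> x" "x \<le> b"
  shows "\<bar>f a + (\<Sum>j<K. del n x j) - f x\<bar> \<le> E0 / 2^n"
proof -
  define cl where "cl j = clampv x (t j) (t (Suc j))" for j
  have tel: "(\<Sum>j<K. f (cl j) - f (t j)) = f x - f a"
    using telescope[where t=t and x=x and N=K and g=f, OF tmono] assms t0 tK by (simp add: cl_def min_def)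
  have each: "\<bar>del n x j - (f (cl j) - f (t j))\<bar> \<le> (Smax + BB) / 2^n" if j: "j < K" for j
  proof -
    note ub = uj_bound[OF j assms(1)]
    define u where "u = uj j x"
    have u1: "\<bar>u\<bar> \<le> 1" using ub(1) by (simp add: u_def)
    have fc: "f (cl j) = (\<Sum>k. dd j k * u^k)"
      using fser[OF j ub(2,3)] by (simp add: cl_def u_def ub(4))
    have h1: "\<bar>hornerA BB n (ds n j) u - hornerE (ds n j) u\<bar> \<le> real (length (ds n j)) * (BB / (4 * 4^n))"
    proof -
      have "stdst 0 0 u 0 (\<lambda>i. if i = 3 then relu u else if i = 4 then relu (-u) else 0)"
        by (simp add: stdst_def gst_def relu_def)
      from horner_ok[OF this _ u1 BB_pos dsabs[OF j] cond] show ?thesis by simp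
    qed
    have "real (length (ds n j)) * (BB / (4 * 4^n)) = BB/4 * (real n / 4^n)" by (simp add: ds_def field_simps)
    also have "\<dots> \<le> BB/4 * (1/2^n)" by (intro mult_left_mono n_over_4pow) (use BB_pos in simp)
    also have "\<dots> \<le> BB / 2^n" using BB_pos by (simp add: field_simps)
    finally have h1': "\<bar>hornerA BB n (ds n j) u - hornerE (ds n j) u\<bar> \<le> BB / 2^n" using h1 by linarith
    have he: "hornerE (ds n j) u = (\<Sum>k<n. dd j k * u^k)"
      unfolding hornerE_sum ds_def by (auto intro!: sum.cong)
    have tr: "\<bar>(\<Sum>k. dd j k * u^k) - (\<Sum>k<n. dd j k * u^k)\<bar> \<le> Smax / 2^n"
      using trunc_bound[OF summ[OF j] u1, of n] divide_right_mono[OF Sj_le[OF j], of "2^n"] by simp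
    have "del n x j - (f (cl j) - f (t j)) = (hornerA BB n (ds n j) u - hornerE (ds n j) u) + ((\<Sum>k<n. dd j k * u^k) - (\<Sum>k. dd j k * u^k))"
    proof -
      have "del n x j = hornerA BB n (ds n j) u - f (t j)" by (simp add: del_def u_def)
      then show ?thesis by (simp add: fc he)
    qed
    then show ?thesis using h1' tr by (simp add: add_divide_distrib)
  qed
  have eq: "f a + (\<Sum>j<K. del n x j) - f x = (\<Sum>j<K. del n x j - (f (cl j) - f (t j)))"
    using tel by (simp add: sum_subtractf)
  have "\<bar>f a + (\<Sum>j<K. del n x j) - f x\<bar> = \<bar>\<Sum>j<K. del n x j - (f (cl j) - f (t j))\<bar>"
    by (simp only: eq)
  also have "\<dots> \<le> (\<Sum>j<K. \<bar>del n x j - (f (cl j) - f (t j))\<bar>)" by (rule sum_abs)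
  also have "\<dots> \<le> (\<Sum>j<K. (Smax + BB) / 2^n)" by (rule sum_mono) (rule each, simp)
  also have "\<dots> = E0 / 2^n" by (simp add: E0_def)
  finally show ?thesis .
qed

lemma length_body: "length (body n) = K * (3 + n * (n + 3))"
proof -
  have "length (body n) = (\<Sum>j\<leftarrow>[0..<K]. 3 + n * (n + 3))"
    by (simp add: body_def length_concat length_piece ds_def o_def)
  also have "\<dots> = K * (3 + n * (n + 3))" by (simp add: sum_list_triv)
  finally show ?thesis .
qed

end



lemma hornerA_Nil[simp]: "hornerA B m [] u = 0" by (simp add: hornerA_def)

lemma nat_sqrt_facts:
  assumes "L > 0"
  shows "nat \<lfloor>sqrt (real L)\<rfloor> * nat \<lfloor>sqrt (real L)\<rfloor> \<le> L" "nat \<lfloor>sqrt (real L)\<rfloor> \<le> L"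
proof -
  define n where "n = nat \<lfloor>sqrt (real L)\<rfloor>"
  have "real n \<le> sqrt (real L)" unfolding n_def by simp
  then have "real n * real n \<le> sqrt (real L) * sqrt (real L)" by (intro mult_mono) auto
  then have "real (n * n) \<le> real L" by simp
  then show nn: "n * n \<le> L" unfolding n_def by linarith
  show "n \<le> L"
  proof (cases "n = 0")
    case False then have "n \<le> n * n" by simp
    then show ?thesis using nn n_def by linarith
  qed (simp add: n_def)
qed

theorem mainTheorem6:
  fixes f :: "real \<Rightarrow> real" and a b :: real
  assumes "has_analytic_extension f a b"
  shows "\<exists>C \<gamma>. C > 0 \<and> \<gamma> > 0 \<and>
    (\<forall>L :: nat. \<exists>\<Phi>. nn_valid \<Phi> \<and>
        (\<forall>x \<in> {a..b}. \<bar>f x - nn_realize \<Phi> x\<bar> \<le> C * exp (- \<gamma> * sqrt (real L))) \<and>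
        real (nn_depth \<Phi>) \<le> C * real L \<and>
        real (nn_width \<Phi>) \<le> C)"
proof (cases "a \<le> b")
  case False
  have "\<forall>L::nat. \<exists>\<Phi>. nn_valid \<Phi> \<and>
        (\<forall>x \<in> {a..b}. \<bar>f x - nn_realize \<Phi> x\<bar> \<le> 1 * exp (- 1 * sqrt (real L))) \<and>
        real (nn_depth \<Phi>) \<le> 1 * real L \<and> real (nn_width \<Phi>) \<le> 1"
    using False trivial_props by (intro allI exI[of _ "[mkL 1 []]"]) auto
  then show ?thesis by (intro exI[of _ 1] exI[of _ 1]) auto
next
  case ab: True
  from assms obtain F \<alpha> \<beta> where Fa: "\<alpha> < a" "b < \<beta>" "analytic_interval F \<alpha> \<beta>" "\<forall>x\<in>{a..b}. F x = f x"
    unfolding has_analytic_extension_def by blast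
  have "\<forall>x0\<in>{\<alpha><..<\<beta>}. \<exists>rc::real \<times> (nat \<Rightarrow> real). fst rc > 0 \<and> summable (\<lambda>k. \<bar>snd rc k\<bar> * fst rc ^ k) \<and>
          (\<forall>x\<in>{\<alpha><..<\<beta>}. \<bar>x - x0\<bar> < fst rc \<longrightarrow> F x = (\<Sum>k. snd rc k * (x - x0)^k))"
  proof
    fix x0 assume "x0 \<in> {\<alpha><..<\<beta>}"
    then obtain r c where "r > 0" "summable (\<lambda>k. \<bar>c k\<bar> * r ^ k)"
        "\<forall>x\<in>{\<alpha><..<\<beta>}. \<bar>x - x0\<bar> < r \<longrightarrow> F x = (\<Sum>k. c k * (x - x0)^k)"
      using Fa(3) unfolding analytic_interval_def by blast
    then show "\<exists>rc::real \<times> (nat \<Rightarrow> real). fst rc > 0 \<and> summable (\<lambda>k. \<bar>snd rc k\<bar> * fst rc ^ k) \<and>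
          (\<forall>x\<in>{\<alpha><..<\<beta>}. \<bar>x - x0\<bar> < fst rc \<longrightarrow> F x = (\<Sum>k. snd rc k * (x - x0)^k))"
      by (intro exI[of _ "(r,c)"]) auto
  qed
  from bchoice[OF this] obtain RC where RC: "\<forall>x0\<in>{\<alpha><..<\<beta>}. fst (RC x0) > 0 \<and> summable (\<lambda>k. \<bar>snd (RC x0) k\<bar> * fst (RC x0) ^ k) \<and>
          (\<forall>x\<in>{\<alpha><..<\<beta>}. \<bar>x - x0\<bar> < fst (RC x0) \<longrightarrow> F x = (\<Sum>k. snd (RC x0) k * (x - x0)^k))"
    by blast
  define R where "R x = fst (RC x)" for x
  define Cf where "Cf x = snd (RC x)" for x
  have inab: "x \<in> {\<alpha><..<\<beta>}" if "x \<in> {a..b}" for x using that Fa by auto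
  have Rpos: "R x > 0" if "x \<in> {a..b}" for x using RC inab[OF that] by (simp add: R_def)
  have Rsum: "summable (\<lambda>k. \<bar>Cf x k\<bar> * R x ^ k)" if "x \<in> {a..b}" for x
    using RC inab[OF that] by (simp add: R_def Cf_def)
  have Rser: "F y = (\<Sum>k. Cf x k * (y - x)^k)" if "x \<in> {a..b}" "y \<in> {a..b}" "\<bar>y - x\<bar> < R x" for x y
    using RC inab[OF that(1)] inab[OF that(2)] that(3) by (simp add: R_def Cf_def)
  obtain e where e: "e > 0" "\<And>x. x \<in> {a..b} \<Longrightarrow> \<exists>G \<in> (\<lambda>c. ball c (R c / 2)) ` {a..b}. ball x e \<subseteq> G"
  proof (rule Heine_Borel_lemma[of "{a..b}" "(\<lambda>c. ball c (R c / 2)) ` {a..b}"])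
    show "compact {a..b}" by simp
    show "{a..b} \<subseteq> \<Union> ((\<lambda>c. ball c (R c / 2)) ` {a..b})"
    proof
      fix x assume "x \<in> {a..b}"
      then show "x \<in> \<Union> ((\<lambda>c. ball c (R c / 2)) ` {a..b})" using Rpos[of x] by (auto intro!: bexI[of _ x])
    qed
  qed auto
  have "\<forall>x\<in>{a..b}. \<exists>c. c \<in> {a..b} \<and> ball x e \<subseteq> ball c (R c / 2)" using e(2) by blast
  from bchoice[OF this] obtain cen where cen: "\<forall>x\<in>{a..b}. cen x \<in> {a..b} \<and> ball x e \<subseteq> ball (cen x) (R (cen x) / 2)"
    by blast
  define K where "K = nat \<lceil>(b - a)/e\<rceil> + 1"
  define hh where "hh = (b - a) / real K"
  define t where "t j = a + real j * hh" for j
  define cj where "cj j = cen (t j)" for j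
  define sj where "sj j = R (cj j) / 2" for j
  define dd where "dd j k = Cf (cj j) k * sj j ^ k" for j k
  have K0: "K > 0" by (simp add: K_def)
  have hh0: "hh \<ge> 0" using ab by (simp add: hh_def)
  have "real K \<ge> (b - a)/e + 1" unfolding K_def by (simp add: of_nat_nat) linarith
  then have "b - a < e * real K" using e(1) by (simp add: field_simps)
  then have hhe: "hh < e" using K0 by (simp add: hh_def field_simps)
  have tK: "t K = b" using K0 by (simp add: t_def hh_def)
  have tmono: "t j \<le> t (Suc j)" for j using hh0 by (simp add: t_def algebra_simps)
  have tin: "a \<le> t j \<and> t (Suc j) \<le> b" if "j < K" for j
  proof -
    have "real (Suc j) * hh \<le> real K * hh" using that hh0 by (intro mult_right_mono) auto
    also have "real K * hh = b - a" using K0 by (simp add: hh_def)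
    finally show ?thesis using hh0 by (simp add: t_def)
  qed
  have tj_ab: "t j \<in> {a..b}" if "j < K" for j using tin[OF that] tmono[of j] by auto
  have cj_ab: "cj j \<in> {a..b}" if "j < K" for j using cen tj_ab[OF that] by (simp add: cj_def)
  have spos: "sj j > 0" if "j < K" for j using Rpos[OF cj_ab[OF that]] by (simp add: sj_def)
  have near: "\<bar>y - cj j\<bar> < sj j" if "j < K" "t j \<le> y" "y \<le> t (Suc j)" for j y
  proof -
    have "t (Suc j) - t j = hh" by (simp add: t_def algebra_simps)
    then have "y \<in> ball (t j) e" using that hhe by (simp add: dist_real_def)
    moreover have "ball (t j) e \<subseteq> ball (cj j) (R (cj j) / 2)" using cen tj_ab[OF that(1)] by (simp add: cj_def)
    ultimately have "y \<in> ball (cj j) (R (cj j) / 2)" by blast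
    then show ?thesis by (simp add: dist_real_def sj_def abs_minus_commute)
  qed
  have yab: "y \<in> {a..b}" if "j < K" "t j \<le> y" "y \<le> t (Suc j)" for j y
    using tin[OF that(1)] that by auto
  have fser: "f y = (\<Sum>k. dd j k * ((y - cj j)/sj j)^k)" if "j < K" "t j \<le> y" "y \<le> t (Suc j)" for j y
  proof -
    have "f y = F y" using Fa(4) yab[OF that] by simp
    also have "\<dots> = (\<Sum>k. Cf (cj j) k * (y - cj j)^k)"
      using Rser[OF cj_ab[OF that(1)] yab[OF that]] near[OF that] Rpos[OF cj_ab[OF that(1)]]
      by (simp add: sj_def)
    also have "\<dots> = (\<Sum>k. dd j k * ((y - cj j)/sj j)^k)"
      using spos[OF that(1)] by (simp add: dd_def power_divide)
    finally show ?thesis .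
  qed
  have summ: "summable (\<lambda>k. \<bar>dd j k\<bar> * 2^k)" if "j < K" for j
  proof -
    have "\<bar>dd j k\<bar> * 2^k = \<bar>Cf (cj j) k\<bar> * R (cj j) ^ k" for k
      using spos[OF that] by (simp add: dd_def abs_mult power_abs sj_def power_divide)
    then show ?thesis using Rsum[OF cj_ab[OF that]] by simp
  qed
  interpret P: pw f a b K t cj sj dd
    by (unfold_locales) (use K0 tmono tK spos near fser summ in \<open>auto simp: t_def\<close>)
  define Fb where "Fb = P.E0 + \<bar>f a\<bar> + (\<Sum>j<K. \<bar>f (t j)\<bar>)"
  have E0nn: "P.E0 \<ge> 0" using P.Smax_nonneg P.BB_pos by (simp add: P.E0_def)
  have fbound: "\<bar>f x\<bar> \<le> Fb" if "x \<in> {a..b}" for x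
  proof -
    have "\<bar>f a + (\<Sum>j<K. P.del 0 x j) - f x\<bar> \<le> P.E0 / 2^0" using P.err[of x 0] that by auto
    moreover have "(\<Sum>j<K. P.del 0 x j) = - (\<Sum>j<K. f (t j))"
      by (simp add: P.del_def P.ds_def sum_negf)
    moreover have "\<bar>\<Sum>j<K. f (t j)\<bar> \<le> (\<Sum>j<K. \<bar>f (t j)\<bar>)" by (rule sum_abs)
    moreover have "P.E0 / 2^0 = P.E0" by simp
    ultimately show ?thesis unfolding Fb_def by (smt (verit))
  qed
  have Fbnn: "Fb \<ge> 0" using E0nn by (simp add: Fb_def sum_nonneg)
  define C where "C = 2 * P.E0 + 7 * real K + 12 + Fb"
  have Cpos: "C > 0" using E0nn Fbnn by (simp add: C_def)
  have main: "\<exists>\<Phi>. nn_valid \<Phi> \<and>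
        (\<forall>x \<in> {a..b}. \<bar>f x - nn_realize \<Phi> x\<bar> \<le> C * exp (- ln 2 * sqrt (real L))) \<and>
        real (nn_depth \<Phi>) \<le> C * real L \<and> real (nn_width \<Phi>) \<le> C" for L :: nat
  proof (cases "L = 0")
    case True
    have "\<bar>f x - nn_realize [mkL 1 []] x\<bar> \<le> C * exp (- ln 2 * sqrt (real L))" if "x \<in> {a..b}" for x
      using fbound[OF that] realize_trivial[of x] True E0nn by (simp add: C_def)
    then show ?thesis using trivial_props Cpos by (intro exI[of _ "[mkL 1 []]"]) auto
  next
    case False
    then have L0: "L > 0" by simp
    define n where "n = nat \<lfloor>sqrt (real L)\<rfloor>"
    define \<Phi> where "\<Phi> = netw a (f a) (P.body n)"
    have wb: "wl (P.body n)" using wl_piece[unfolded wl_def] unfolding P.body_def wl_def by auto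
    note props = netw_props[OF wb, of a "f a"]
    have err: "\<bar>f x - nn_realize \<Phi> x\<bar> \<le> C * exp (- ln 2 * sqrt (real L))" if "x \<in> {a..b}" for x
    proof -
      have "\<bar>f x - nn_realize \<Phi> x\<bar> = \<bar>f a + (\<Sum>j<K. P.del n x j) - f x\<bar>"
        using that P.realize[of x n] by (simp add: \<Phi>_def abs_minus_commute)
      also have "\<dots> \<le> P.E0 / 2^n" using P.err[of x n] that by auto
      also have "\<dots> = P.E0 * (1 / 2^n)" by simp
      also have "\<dots> \<le> P.E0 * (2 * exp (- ln 2 * sqrt (real L)))"
        using inv2pow_exp[of "real L"] E0nn by (intro mult_left_mono) (auto simp: n_def)
      also have "\<dots> = (2 * P.E0) * exp (- ln 2 * sqrt (real L))" by simp
      also have "\<dots> \<le> C * exp (- ln 2 * sqrt (real L))"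
        using E0nn Fbnn by (intro mult_right_mono) (auto simp: C_def)
      finally show ?thesis .
    qed
    have dep: "nn_depth \<Phi> \<le> (7 * K + 1) * L"
    proof -
      have nn: "n * n \<le> L" "n \<le> L" using nat_sqrt_facts[OF L0] by (auto simp: n_def)
      have "3 + n * (n + 3) \<le> 7 * L" using nn L0 by (simp add: algebra_simps)
      then have "K * (3 + n * (n + 3)) \<le> K * (7 * L)" by simp
      then show ?thesis using props(2) P.length_body[of n] L0 by (simp add: \<Phi>_def algebra_simps)
    qed
    have "real (nn_depth \<Phi>) \<le> real ((7 * K + 1) * L)" using dep by linarith
    also have "\<dots> = (7 * real K + 1) * real L" by (simp add: algebra_simps)
    also have "\<dots> \<le> C * real L" using E0nn Fbnn by (intro mult_right_mono) (auto simp: C_def)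
    finally have d: "real (nn_depth \<Phi>) \<le> C * real L" .
    have w: "real (nn_width \<Phi>) \<le> C" using props(3) E0nn Fbnn by (simp add: \<Phi>_def C_def)
    show ?thesis using props(1) err d w by (intro exI[of _ \<Phi>]) (auto simp: \<Phi>_def)
  qed
  show ?thesis using Cpos main by (intro exI[of _ C] exI[of _ "ln 2"]) auto
qed


end
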